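(* Let $\lambda,\mu,\rho,\mathsf D>0$, $k\ge2$ an integer, $X=\mathbb R$, let $\hat f=\hat f_k$, i.e. $\hat f(x,y)=\sum_{j=0}^k\frac1{j!}\partial_y^jf(x,\hat y)(y-\hat y)^j$, and let $\mu_{\mathsf{cr}}=\sqrt{\frac{\lambda\rho\mathsf D^{k-1}}{k!}}$. 1. If $\mu\le\mu_{\mathsf{cr}}$, then for $Y=[0,\mathsf D]$ there exist $\bar\mu\le\mu$, $\hat y\in Y$ and $x^*\in\mathbb R$ such that, for $f=F_{k,-1,\lambda,\bar\mu,\rho}$, $\hat\varphi_{2\lambda}'(x^* )=0$ while $|\varphi_{2\lambda}'(x^* )|\ge\frac{\mu\mathsf D}{2k}$. 2. If $\mu\ge\mu_{\mathsf{cr}}$, then for $Y=[-\frac12\mathsf D,\frac12\mathsf D]$ there exist $\bar\mu\le\mu$, $\hat y\in Y$ and $x^*\in\mathbb R$ such that, for $f=F_{k,1,\lambda,\bar\mu,\rho}$, $\hat\varphi_{2\lambda}'(x^* )=0$ while $|\varphi_{2\lambda}'(x^* )|\ge\frac{\mu_{\mathsf{cr}}\mathsf D}{2k}$.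
   Context: For $k\in\mathbb N\cup\{0\}$, $s\in\{\pm1,0\}$, $\lambda>0$, $\mu\ge0$, $\rho\ge0$: $F_{k,s,\lambda,\mu,\rho}(x,y)=-\frac{\lambda x^2}{2}+\mu xy+\frac{s\rho|y|^{k+1}}{(k+1)!}$ on $\mathbb R\times\mathbb R$. Given $f$, $X,Y\subseteq\mathbb R$ and $\hat y\in Y$: $\varphi(x)=\max_{y\in Y}f(x,y)$, $\hat\varphi(x)=\max_{y\in Y}\hat f(x,y)$, and for a function $\phi$ on $X$, $\phi_{2\lambda}(x)=\min_{u\in X}\{\phi(u)+\lambda(u-x)^2\}$ (Moreau envelope with parameter $2\lambda$); $'$ denotes the derivative in $x$. *)

theory Defs
  imports "HOL-Analysis.Analysis"
begin

definition F :: "nat \<Rightarrow> real \<Rightarrow> real \<Rightarrow> real \<Rightarrow> real \<Rightarrow> real \<Rightarrow> real \<Rightarrow> real" where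
  "F k s lam mu rho x y = - lam * x^2 / 2 + mu * x * y + s * rho * \<bar>y\<bar>^(k+1) / fact (k+1)"

definition taylor_y :: "nat \<Rightarrow> (real \<Rightarrow> real \<Rightarrow> real) \<Rightarrow> real \<Rightarrow> real \<Rightarrow> real \<Rightarrow> real" where
  "taylor_y k f yh x y = (\<Sum>j\<le>k. ((deriv ^^ j) (\<lambda>t. f x t) yh) / fact j * (y - yh)^j)"

definition maxY :: "real set \<Rightarrow> (real \<Rightarrow> real \<Rightarrow> real) \<Rightarrow> real \<Rightarrow> real" where
  "maxY Y f x = Sup ((\<lambda>y. f x y) ` Y)"

text \<open>Moreau envelope with parameter 2 lambda over X = R:
  phi_{2 lambda}(x) = min_u { phi(u) + lambda (u-x)^2 }\<close>
definition moreau :: "real \<Rightarrow> (real \<Rightarrow> real) \<Rightarrow> real \<Rightarrow> real" where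
  "moreau lam phi x = Inf ((\<lambda>u. phi u + lam * (u - x)^2) ` UNIV)"

end

theory Submission
  imports Defs "HOL-Analysis.Analysis"
begin


lemma env2:
  fixes lam M b u0 x0 :: real and phi :: "real \<Rightarrow> real"
  assumes lam: "lam > 0"
  and lo: "\<And>u. phi u \<ge> -lam*u^2/2 + M + b*(u-u0)"
  and up: "phi u0 \<le> -lam*u0^2/2 + M"
  and b: "b = lam*(2*x0 - u0)"
  shows "(moreau lam phi has_real_derivative (2*lam*(x0-u0))) (at x0)"
proof -
  define e where "e = moreau lam phi"
  define Lb where "Lb = (\<lambda>x. M + lam*x^2 - b*u0 - (b - 2*lam*x)^2/(2*lam))"
  have L: "phi u + lam*(u-x)^2 \<ge> Lb x" for x u
  proof -
    have "phi u + lam*(u-x)^2 - Lb x \<ge> -lam*u^2/2 + M + b*(u-u0) + lam*(u-x)^2 - Lb x"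
      using lo[of u] by linarith
    also have "-lam*u^2/2 + M + b*(u-u0) + lam*(u-x)^2 - Lb x = (lam*u + b - 2*lam*x)^2/(2*lam)"
      unfolding Lb_def using lam by (simp add: field_simps power2_eq_square)
    also have "\<dots> \<ge> 0" using lam by simp
    finally show ?thesis by linarith
  qed
  have bdd: "bdd_below ((\<lambda>u. phi u + lam * (u - x)^2) ` UNIV)" for x
    using L by (auto intro!: bdd_belowI[where m="Lb x"])
  have U: "e x \<le> phi u0 + lam*(u0-x)^2" for x
    unfolding e_def moreau_def by (rule cInf_lower[OF _ bdd]) auto
  have Lo: "e x \<ge> Lb x" for x
    unfolding e_def moreau_def by (rule cInf_greatest) (use L in auto)
  define d where "d = 2*lam*(x0-u0)"
  have U2: "e x \<le> -lam*u0^2/2 + M + lam*(u0-x)^2" for x using U[of x] up by linarith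
  have eq: "Lb x0 = -lam*u0^2/2 + M + lam*(u0-x0)^2"
    unfolding Lb_def b using lam by (simp add: field_simps power2_eq_square)
  have e0: "e x0 = -lam*u0^2/2 + M + lam*(u0-x0)^2" using U2[of x0] Lo[of x0] eq by linarith
  have up2: "e x - e x0 - d*(x-x0) \<le> lam*(x-x0)^2" for x
  proof -
    have "-lam*u0^2/2 + M + lam*(u0-x)^2 - (-lam*u0^2/2 + M + lam*(u0-x0)^2) - d*(x-x0) = lam*(x-x0)^2"
      unfolding d_def by (simp add: field_simps power2_eq_square)
    then show ?thesis using U2[of x] e0 by linarith
  qed
  have lo2: "e x - e x0 - d*(x-x0) \<ge> -lam*(x-x0)^2" for x
  proof -
    have "Lb x - (-lam*u0^2/2 + M + lam*(u0-x0)^2) - d*(x-x0) = -lam*(x-x0)^2"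
      unfolding d_def Lb_def b using lam by (simp add: field_simps power2_eq_square)
    then show ?thesis using Lo[of x] e0 by linarith
  qed
  have bnd: "norm ((e y - e x0)/(y - x0) - d) \<le> lam * \<bar>y - x0\<bar>" if "y \<noteq> x0" for y
  proof -
    have ne: "y - x0 \<noteq> 0" using that by simp
    have "(e y - e x0)/(y - x0) - d = (e y - e x0 - d*(y-x0))/(y-x0)"
      using ne by (simp add: field_simps)
    also have "norm \<dots> = \<bar>e y - e x0 - d*(y-x0)\<bar> / \<bar>y-x0\<bar>" by (simp add: abs_divide)
    also have "\<dots> \<le> lam*(y-x0)^2 / \<bar>y-x0\<bar>"
      using up2[of y] lo2[of y] ne by (intro divide_right_mono) auto
    also have "\<dots> = lam * \<bar>y - x0\<bar>"
    proof -
      have a: "(y-x0)^2 = \<bar>y-x0\<bar>*\<bar>y-x0\<bar>" by (metis abs_mult_self_eq power2_eq_square)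
      have "lam*(y-x0)^2/\<bar>y-x0\<bar> = (lam*\<bar>y-x0\<bar>)*\<bar>y-x0\<bar>/\<bar>y-x0\<bar>" by (simp only: a mult.assoc)
      also have "\<dots> = lam*\<bar>y-x0\<bar>" using ne by (intro nonzero_mult_div_cancel_right) simp
      finally show ?thesis .
    qed
    finally show ?thesis .
  qed
  have "((\<lambda>y. (e y - e x0)/(y - x0) - d) \<longlongrightarrow> 0) (at x0)"
  proof (rule Lim_null_comparison)
    show "\<forall>\<^sub>F y in at x0. norm ((e y - e x0)/(y - x0) - d) \<le> lam * \<bar>y - x0\<bar>"
      using bnd by (auto simp: eventually_at_filter)
    have "((\<lambda>y. lam * \<bar>y - x0\<bar>) \<longlongrightarrow> lam * \<bar>x0 - x0\<bar>) (at x0)"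
      by (intro tendsto_intros)
    then show "((\<lambda>y. lam * \<bar>y - x0\<bar>) \<longlongrightarrow> 0) (at x0)" by simp
  qed
  then have "((\<lambda>y. (e y - e x0)/(y - x0)) \<longlongrightarrow> d) (at x0)"
    by (simp add: LIM_zero_iff)
  then show ?thesis unfolding has_field_derivative_iff e_def d_def .
qed



lemma sgnpow_deriv:
  fixes t :: real and n j :: nat
  assumes n: "n \<ge> 2"
  shows "((\<lambda>s. sgn s ^ j * \<bar>s\<bar>^n) has_real_derivative (real n * sgn t ^ Suc j * \<bar>t\<bar>^(n-1))) (at t)"
proof (cases "t > 0")
  case True
  have "((\<lambda>s. s^n) has_real_derivative real n * t^(n - Suc 0)) (at t)"
    by (rule DERIV_pow)
  then have "((\<lambda>s. sgn s ^ j * \<bar>s\<bar>^n) has_real_derivative real n * t^(n - Suc 0)) (at t)"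
    by (rule has_field_derivative_transform_within_open[where S="{0<..}"]) (use True in auto)
  then show ?thesis using True by simp
next
  case False
  show ?thesis
  proof (cases "t < 0")
    case True
    have "((\<lambda>s. (-1)^j * (-s)^n) has_real_derivative (-1)^j * (real n * (-t)^(n - 1) * -1)) (at t)"
      by (auto intro!: derivative_eq_intros)
    then have "((\<lambda>s. sgn s ^ j * \<bar>s\<bar>^n) has_real_derivative (-1)^j * (real n * (-t)^(n - 1) * -1)) (at t)"
      by (rule has_field_derivative_transform_within_open[where S="{..<0}"]) (use True in auto)
    then show ?thesis using True by (simp add: algebra_simps)
  next
    case False
    with \<open>\<not> t > 0\<close> have t0: "t = 0" by simp
    have n1: "n - 1 \<ge> 1" using n by simp
    have "((\<lambda>y. (sgn y ^ j * \<bar>y\<bar>^n - sgn 0 ^ j * \<bar>0::real\<bar>^n) / (y - 0)) \<longlongrightarrow> 0) (at 0)"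
    proof (rule Lim_null_comparison)
      show "\<forall>\<^sub>F y in at 0. norm ((sgn y ^ j * \<bar>y\<bar>^n - sgn 0 ^ j * \<bar>0::real\<bar>^n) / (y - 0)) \<le> \<bar>y\<bar>^(n-1)"
      proof (rule always_eventually, rule allI)
        fix y :: real
        have "norm ((sgn y ^ j * \<bar>y\<bar>^n - sgn 0 ^ j * \<bar>0::real\<bar>^n) / (y - 0)) = \<bar>sgn y\<bar>^j * (\<bar>y\<bar>^n / \<bar>y\<bar>)"
        proof -
          have z: "(0::real)^n = 0" using n by simp
          have "(sgn y ^ j * \<bar>y\<bar>^n - sgn 0 ^ j * \<bar>0::real\<bar>^n) / (y - 0) = sgn y ^ j * \<bar>y\<bar>^n / y"
            using z by simp
          also have "norm \<dots> = \<bar>sgn y\<bar>^j * (\<bar>y\<bar>^n / \<bar>y\<bar>)"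
            by (simp only: real_norm_def abs_divide abs_mult power_abs abs_abs mult.assoc times_divide_eq_right)
          finally show ?thesis .
        qed
        also have "\<dots> \<le> 1 * (\<bar>y\<bar>^n / \<bar>y\<bar>)"
          by (intro mult_right_mono) (auto simp: abs_sgn_eq power_le_one)
        also have "\<bar>y\<bar>^n / \<bar>y\<bar> = \<bar>y\<bar>^(n-1)"
        proof (cases "y = 0")
          case True then show ?thesis using n by simp
        next
          case False
          have "\<bar>y\<bar>^n = \<bar>y\<bar>^(n-1) * \<bar>y\<bar>" using n by (metis Suc_diff_1 less_le_trans pos2 power_Suc2)
          then show ?thesis using False by simp
        qed
        finally show "norm ((sgn y ^ j * \<bar>y\<bar>^n - sgn 0 ^ j * \<bar>0::real\<bar>^n) / (y - 0)) \<le> \<bar>y\<bar>^(n-1)" by simp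
      qed
      have lim: "((\<lambda>y::real. \<bar>y\<bar>^(n-1)) \<longlongrightarrow> \<bar>0\<bar>^(n-1)) (at 0)"
        by (intro tendsto_intros)
      have z1: "\<bar>0::real\<bar>^(n-1) = 0" using n1 by simp
      show "((\<lambda>y::real. \<bar>y\<bar>^(n-1)) \<longlongrightarrow> 0) (at 0)" using lim unfolding z1 .
    qed
    then have "((\<lambda>s. sgn s ^ j * \<bar>s\<bar>^n) has_real_derivative 0) (at 0)"
      unfolding has_field_derivative_iff by simp
    then show ?thesis using t0 n by simp
  qed
qed


lemma hderiv:
  fixes A B K :: real and k j :: nat
  assumes "j \<le> k"
  shows "(deriv ^^ j) (\<lambda>t. A + B*t + K*\<bar>t\<bar>^(k+1)) =
    (\<lambda>t. (if j = 0 then A + B*t else if j = 1 then B else 0) + K * (fact (k+1) / fact (k+1-j)) * (sgn t ^ j * \<bar>t\<bar>^(k+1-j)))"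
  using assms
proof (induction j)
  case 0
  then show ?case by simp
next
  case (Suc j)
  then have jk: "j < k" by simp
  have IH: "(deriv ^^ j) (\<lambda>t. A + B*t + K*\<bar>t\<bar>^(k+1)) =
    (\<lambda>t. (if j = 0 then A + B*t else if j = 1 then B else 0) + K * (fact (k+1) / fact (k+1-j)) * (sgn t ^ j * \<bar>t\<bar>^(k+1-j)))"
    using Suc jk by simp
  define c where "c = K * (fact (k+1) / fact (k+1-j) :: real)"
  have n2: "k + 1 - j \<ge> 2" using jk by simp
  have cj: "fact (k+1) / fact (k+1-j) * real (k+1-j) = (fact (k+1) / fact (k+1 - Suc j) :: real)"
  proof -
    have e1: "k+1-j = Suc (k - j)" using jk by simp
    have e2: "k+1 - Suc j = k - j" by simp
    show ?thesis unfolding e1 e2 by (simp add: fact_Suc field_simps del: of_nat_Suc)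
  qed
  have D: "((\<lambda>t. (if j = 0 then A + B*t else if j = 1 then B else 0) + c * (sgn t ^ j * \<bar>t\<bar>^(k+1-j)))
      has_real_derivative ((if j = 0 then B else 0) + c * (real (k+1-j) * sgn t ^ Suc j * \<bar>t\<bar>^(k+1-j-1)))) (at t)" for t
  proof -
    have P: "((\<lambda>t. (if j = 0 then A + B*t else if j = 1 then B else 0)) has_real_derivative (if j = 0 then B else 0)) (at t)"
      by (cases "j = 0") (auto intro!: derivative_eq_intros)
    show ?thesis
      by (intro DERIV_add P DERIV_cmult sgnpow_deriv n2)
  qed
  show ?case
  proof (rule ext)
    fix t
    have "(deriv ^^ Suc j) (\<lambda>t. A + B*t + K*\<bar>t\<bar>^(k+1)) t = deriv ((deriv ^^ j) (\<lambda>t. A + B*t + K*\<bar>t\<bar>^(k+1))) t"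
      by simp
    also have "\<dots> = (if j = 0 then B else 0) + c * (real (k+1-j) * sgn t ^ Suc j * \<bar>t\<bar>^(k+1-j-1))"
      unfolding IH c_def[symmetric] by (rule DERIV_imp_deriv[OF D])
    also have "\<dots> = (if Suc j = 0 then A + B*t else if Suc j = 1 then B else 0) + K * (fact (k+1) / fact (k+1-Suc j)) * (sgn t ^ Suc j * \<bar>t\<bar>^(k+1-Suc j))"
    proof -
      have e1: "k+1-j-1 = k+1-Suc j" by simp
      have e2: "c * real (k+1-j) = K * (fact (k+1) / fact (k+1-Suc j))"
        unfolding c_def by (metis cj mult.assoc)
      have e3: "c * (real (k+1-j) * sgn t ^ Suc j * \<bar>t\<bar>^(k+1-j-1)) = (c * real (k+1-j)) * (sgn t ^ Suc j * \<bar>t\<bar>^(k+1-Suc j))"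
        by (simp only: e1 mult.assoc)
      have e4: "(if j = 0 then B else 0) = (if Suc j = 0 then A + B*t else if Suc j = 1 then B else (0::real))" by simp
      show ?thesis unfolding e3 e2 e4 ..
    qed
    finally show "(deriv ^^ Suc j) (\<lambda>t. A + B*t + K*\<bar>t\<bar>^(k+1)) t = (if Suc j = 0 then A + B*t else if Suc j = 1 then B else 0) + K * (fact (k+1) / fact (k+1-Suc j)) * (sgn t ^ Suc j * \<bar>t\<bar>^(k+1-Suc j))" .
  qed
qed


lemma taylor_F:
  fixes lam mub rho s yh x y :: real
  assumes k: "k \<ge> 1"
  shows "taylor_y k (F k s lam mub rho) yh x y = -lam*x^2/2 + mub*x*y + s*rho/fact(k+1) *
     (\<Sum>j\<le>k. (fact (k+1) / (fact (k+1-j) * fact j)) * (sgn yh ^ j * \<bar>yh\<bar>^(k+1-j)) * (y-yh)^j)"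
proof -
  define A where "A = -lam*x^2/2"
  define B where "B = mub*x"
  define K where "K = s*rho/fact(k+1)"
  have f: "(\<lambda>t. F k s lam mub rho x t) = (\<lambda>t. A + B*t + K*\<bar>t\<bar>^(k+1))"
    unfolding F_def A_def B_def K_def by (auto simp: field_simps)
  have tm: "(deriv ^^ j) (\<lambda>t. F k s lam mub rho x t) yh / fact j * (y - yh)^j =
      ((if j = 0 then A + B*yh else 0) + (if j = 1 then B*(y-yh) else 0)) +
      K * ((fact (k+1) / (fact (k+1-j) * fact j)) * (sgn yh ^ j * \<bar>yh\<bar>^(k+1-j)) * (y-yh)^j)"
    if "j \<in> {..k}" for j
  proof -
    have jk: "j \<le> k" using that by simp
    show ?thesis unfolding f hderiv[OF jk]
      by (auto simp: field_simps)
  qed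
  have "taylor_y k (F k s lam mub rho) yh x y =
     (\<Sum>j\<le>k. ((if j = 0 then A + B*yh else 0) + (if j = 1 then B*(y-yh) else 0)) +
      K * ((fact (k+1) / (fact (k+1-j) * fact j)) * (sgn yh ^ j * \<bar>yh\<bar>^(k+1-j)) * (y-yh)^j))"
    unfolding taylor_y_def by (rule sum.cong[OF refl tm])
  also have "\<dots> = (A + B*yh) + B*(y-yh) + K * (\<Sum>j\<le>k. (fact (k+1) / (fact (k+1-j) * fact j)) * (sgn yh ^ j * \<bar>yh\<bar>^(k+1-j)) * (y-yh)^j)"
    using k by (simp add: sum.distrib sum_distrib_left)
  finally show ?thesis unfolding A_def B_def K_def by (simp add: algebra_simps)
qed


lemma taylor_sum_zero:
  "(\<Sum>j\<le>k. (fact (k+1) / (fact (k+1-j) * fact j)) * (sgn (0::real) ^ j * \<bar>0::real\<bar>^(k+1-j)) * (y-0)^j) = 0"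
  by (intro sum.neutral) (auto simp: zero_power)

lemma taylor_sum_pos:
  fixes yh y :: real
  assumes "yh > 0"
  shows "(\<Sum>j\<le>k. (fact (k+1) / (fact (k+1-j) * fact j)) * (sgn yh ^ j * \<bar>yh\<bar>^(k+1-j)) * (y-yh)^j) = y^(k+1) - (y-yh)^(k+1)"
proof -
  have "y^(k+1) = ((y-yh) + yh)^(k+1)" by simp
  also have "\<dots> = (\<Sum>i\<le>k+1. of_nat ((k+1) choose i) * (y-yh)^i * yh^(k+1-i))"
    by (rule binomial_ring)
  also have "\<dots> = (\<Sum>i\<le>k. of_nat ((k+1) choose i) * (y-yh)^i * yh^(k+1-i)) + (y-yh)^(k+1)"
    by simp
  also have "(\<Sum>i\<le>k. of_nat ((k+1) choose i) * (y-yh)^i * yh^(k+1-i)) =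
     (\<Sum>j\<le>k. (fact (k+1) / (fact (k+1-j) * fact j)) * (sgn yh ^ j * \<bar>yh\<bar>^(k+1-j)) * (y-yh)^j)"
  proof (rule sum.cong[OF refl])
    fix i assume "i \<in> {..k}"
    then have "i \<le> k+1" by simp
    then show "of_nat ((k+1) choose i) * (y-yh)^i * yh^(k+1-i) = (fact (k+1) / (fact (k+1-i) * fact i)) * (sgn yh ^ i * \<bar>yh\<bar>^(k+1-i)) * (y-yh)^i"
      using assms by (simp add: binomial_fact mult.commute)
  qed
  finally show ?thesis by simp
qed



lemma P_deriv:
  fixes h :: real
  shows "((\<lambda>y. y^k - (y-h)^k) has_real_derivative (real k * y^(k-1) - real k * (y-h)^(k-1))) (at y)"
  by (auto intro!: derivative_eq_intros)

lemma O_deriv: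
  fixes a c h :: real
  shows "((\<lambda>y. a*y + c*(y^(k+1) - (y-h)^(k+1))) has_real_derivative (a + c*real (k+1)*(y^k - (y-h)^k))) (at y)"
proof -
  have d1: "((\<lambda>y. y^(k+1)) has_real_derivative real (k+1) * y^k) (at y)"
    using DERIV_pow[of "k+1" y] by simp
  have d0: "((\<lambda>y. y-h) has_real_derivative 1) (at y)"
    by (auto intro!: derivative_eq_intros)
  have d2: "((\<lambda>y. (y-h)^(k+1)) has_real_derivative real (k+1) * (y-h)^k * 1) (at y)"
    using DERIV_power[OF d0, of "k+1"] by simp
  have "((\<lambda>y. a*y + c*(y^(k+1) - (y-h)^(k+1))) has_real_derivative (a*1 + c*(real (k+1) * y^k - real (k+1) * (y-h)^k * 1))) (at y)"
    by (intro DERIV_add DERIV_cmult DERIV_diff d1 d2 DERIV_ident)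
  then show ?thesis by (simp add: algebra_simps)
qed

lemma P_mono_even:
  fixes h t y :: real
  assumes "even k" "h \<ge> 0" "t \<le> y"
  shows "t^k - (t-h)^k \<le> y^k - (y-h)^k"
proof (rule deriv_nonneg_imp_mono[OF P_deriv _ assms(3)])
  fix x assume "x \<in> {t..y}"
  have "odd (k-1) \<or> k = 0" using assms(1) by (cases k) auto
  then have "(x-h)^(k-1) \<le> x^(k-1)"
    using assms(2) by (auto intro: power_mono_odd)
  then show "0 \<le> real k * x^(k-1) - real k * (x-h)^(k-1)"
    by (simp add: right_diff_distrib[symmetric] mult_nonneg_nonneg)
qed

lemma P_anti_odd:
  fixes h t y :: real
  assumes "odd k" "h \<ge> 0" "t \<le> y" "y \<le> h/2"
  shows "t^k - (t-h)^k \<ge> y^k - (y-h)^k"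
proof (rule deriv_nonpos_imp_antimono[OF P_deriv _ assms(3)])
  fix x assume x: "x \<in> {t..y}"
  have ev: "even (k-1)" using assms(1) by simp
  have "\<bar>x\<bar> \<le> \<bar>x-h\<bar>" using x assms by auto
  then have "\<bar>x\<bar>^(k-1) \<le> \<bar>x-h\<bar>^(k-1)" by (rule power_mono) simp
  then have "x^(k-1) \<le> (x-h)^(k-1)" using ev by (simp add: power_even_abs)
  then show "real k * x^(k-1) - real k * (x-h)^(k-1) \<le> 0"
    by (simp add: right_diff_distrib[symmetric] mult_nonneg_nonpos)
qed

lemma P_mono_odd:
  fixes h t y :: real
  assumes "odd k" "h \<ge> 0" "t \<le> y" "h/2 \<le> t"
  shows "t^k - (t-h)^k \<le> y^k - (y-h)^k"
proof (rule deriv_nonneg_imp_mono[OF P_deriv _ assms(3)])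
  fix x assume x: "x \<in> {t..y}"
  have ev: "even (k-1)" using assms(1) by simp
  have "\<bar>x-h\<bar> \<le> \<bar>x\<bar>" using x assms by auto
  then have "\<bar>x-h\<bar>^(k-1) \<le> \<bar>x\<bar>^(k-1)" by (rule power_mono) simp
  then have "(x-h)^(k-1) \<le> x^(k-1)" using ev by (simp add: power_even_abs)
  then show "0 \<le> real k * x^(k-1) - real k * (x-h)^(k-1)"
    by (simp add: right_diff_distrib[symmetric])
qed

lemma G_even:
  fixes a c h D y :: real
  assumes "even k" "c \<ge> 0" "h \<ge> 0" "y \<in> {-D/2..D/2}"
  shows "a*y + c*(y^(k+1) - (y-h)^(k+1)) \<le>
    max (a*(-D/2) + c*((-D/2)^(k+1) - (-D/2-h)^(k+1))) (a*(D/2) + c*((D/2)^(k+1) - (D/2-h)^(k+1)))"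
proof (cases "a + c*real (k+1)*(y^k - (y-h)^k) \<le> 0")
  case True
  have "a*y + c*(y^(k+1) - (y-h)^(k+1)) \<le> a*(-D/2) + c*((-D/2)^(k+1) - (-D/2-h)^(k+1))"
  proof (rule deriv_nonpos_imp_antimono[OF O_deriv])
    fix x assume x: "x \<in> {-D/2..y}"
    have "x^k - (x-h)^k \<le> y^k - (y-h)^k" using x by (intro P_mono_even assms) auto
    then have "c*real (k+1)*(x^k - (x-h)^k) \<le> c*real (k+1)*(y^k - (y-h)^k)"
      using assms(2) by (intro mult_left_mono) auto
    then show "a + c*real (k+1)*(x^k - (x-h)^k) \<le> 0" using True by linarith
  qed (use assms in auto)
  then show ?thesis by linarith
next
  case False
  have "a*y + c*(y^(k+1) - (y-h)^(k+1)) \<le> a*(D/2) + c*((D/2)^(k+1) - (D/2-h)^(k+1))"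
  proof (rule deriv_nonneg_imp_mono[OF O_deriv])
    fix x assume x: "x \<in> {y..D/2}"
    have "x^k - (x-h)^k \<ge> y^k - (y-h)^k" using x by (intro P_mono_even assms) auto
    then have "c*real (k+1)*(x^k - (x-h)^k) \<ge> c*real (k+1)*(y^k - (y-h)^k)"
      using assms(2) by (intro mult_left_mono) auto
    then show "0 \<le> a + c*real (k+1)*(x^k - (x-h)^k)" using False by linarith
  qed (use assms in auto)
  then show ?thesis by linarith
qed


lemma G_odd:
  fixes a c h D z y :: real
  assumes k: "odd k" and c: "c \<ge> 0" and h: "h \<ge> 0" and zh: "z \<le> h/2" and zD: "-D/2 \<le> z" and hD: "h/2 \<le> D/2"
    and stat: "a + c*real (k+1)*(z^k - (z-h)^k) = 0"
    and E: "a*(D/2) + c*((D/2)^(k+1) - (D/2-h)^(k+1)) \<le> a*z + c*(z^(k+1) - (z-h)^(k+1))"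
    and y: "y \<in> {-D/2..D/2}"
  shows "a*y + c*(y^(k+1) - (y-h)^(k+1)) \<le> a*z + c*(z^(k+1) - (z-h)^(k+1))"
proof -
  define Ob where "Ob = (\<lambda>y. a*y + c*(y^(k+1) - (y-h)^(k+1)))"
  define P where "P = (\<lambda>y::real. y^k - (y-h)^k)"
  have Od: "(Ob has_real_derivative (a + c*real (k+1)*P t)) (at t)" for t
    unfolding Ob_def P_def by (rule O_deriv)
  have statP: "a + c*real (k+1)*P z = 0" using stat unfolding P_def .
  have left: "Ob y' \<le> Ob z" if "-D/2 \<le> y'" "y' \<le> h/2" for y'
  proof (cases "y' \<le> z")
    case True
    show ?thesis
    proof (rule deriv_nonneg_imp_mono[OF Od _ True])
      fix t assume t: "t \<in> {y'..z}"
      have "P t \<ge> P z" unfolding P_def using t zh by (intro P_anti_odd k h) auto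
      then have "c*real (k+1)*P t \<ge> c*real (k+1)*P z" using c by (intro mult_left_mono) auto
      then show "0 \<le> a + c*real (k+1)*P t" using statP by linarith
    qed
  next
    case False
    show ?thesis
    proof (rule deriv_nonpos_imp_antimono[OF Od])
      fix t assume t: "t \<in> {z..y'}"
      have "P t \<le> P z" unfolding P_def using t that by (intro P_anti_odd k h) auto
      then have "c*real (k+1)*P t \<le> c*real (k+1)*P z" using c by (intro mult_left_mono) auto
      then show "a + c*real (k+1)*P t \<le> 0" using statP by linarith
    qed (use False in auto)
  qed
  have "Ob y \<le> Ob z"
  proof (cases "y \<le> h/2")
    case True
    then show ?thesis using left y by auto
  next
    case False
    show ?thesis
    proof (cases "P y \<le> P z")
      case True
      have "Ob y \<le> Ob (h/2)"
      proof (rule deriv_nonpos_imp_antimono[OF Od])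
        fix t assume t: "t \<in> {h/2..y}"
        have "P t \<le> P y" unfolding P_def using t by (intro P_mono_odd k h) auto
        then have "c*real (k+1)*P t \<le> c*real (k+1)*P z" using c True
          by (intro mult_left_mono) auto
        then show "a + c*real (k+1)*P t \<le> 0" using statP by linarith
      qed (use False in auto)
      also have "Ob (h/2) \<le> Ob z" using left[of "h/2"] zh zD by auto
      finally show ?thesis .
    next
      case False2: False
      have "Ob y \<le> Ob (D/2)"
      proof (rule deriv_nonneg_imp_mono[OF Od])
        fix t assume t: "t \<in> {y..D/2}"
        have "P t \<ge> P y" unfolding P_def using t False by (intro P_mono_odd k h) auto
        then have "c*real (k+1)*P t \<ge> c*real (k+1)*P z" using c False2
          by (intro mult_left_mono) auto
        then show "0 \<le> a + c*real (k+1)*P t" using statP by linarith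
      qed (use y in auto)
      also have "Ob (D/2) \<le> Ob z" using E unfolding Ob_def .
      finally show ?thesis .
    qed
  qed
  then show ?thesis unfolding Ob_def .
qed

lemma tangent_pow:
  fixes y y0 :: real
  assumes "y \<ge> 0" "y0 \<ge> 0"
  shows "y0^(n+1) + real (n+1)*y0^n*(y - y0) \<le> y^(n+1)"
proof -
  define g where "g = (\<lambda>y::real. y^(n+1) - real (n+1)*y0^n*y)"
  have gd: "(g has_real_derivative (real (n+1)*t^n - real (n+1)*y0^n)) (at t)" for t
  proof -
    have d1: "((\<lambda>y. y^(n+1)) has_real_derivative real (n+1) * t^n) (at t)"
      using DERIV_pow[of "n+1" t] by simp
    show ?thesis unfolding g_def using DERIV_diff[OF d1 DERIV_cmult[OF DERIV_ident, of "real (n+1)*y0^n"]] by simp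
  qed
  have "g y0 \<le> g y"
  proof (cases "y0 \<le> y")
    case True
    show ?thesis
    proof (rule deriv_nonneg_imp_mono[OF gd _ True])
      fix t assume "t \<in> {y0..y}"
      then have "y0^n \<le> t^n" using assms by (intro power_mono) auto
      then show "0 \<le> real (n+1)*t^n - real (n+1)*y0^n" by simp
    qed
  next
    case False
    show ?thesis
    proof (rule deriv_nonpos_imp_antimono[OF gd])
      fix t assume "t \<in> {y..y0}"
      then have "t^n \<le> y0^n" using assms by (intro power_mono) auto
      then show "real (n+1)*t^n - real (n+1)*y0^n \<le> 0" by simp
    qed (use False in auto)
  qed
  then show ?thesis unfolding g_def by (simp add: algebra_simps)
qed



lemma maxY_ge:
  fixes f :: "real \<Rightarrow> real \<Rightarrow> real"
  assumes "y \<in> Y" "compact Y" "continuous_on Y (f x)"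
  shows "f x y \<le> maxY Y f x"
  unfolding maxY_def
proof (rule cSup_upper)
  show "f x y \<in> (\<lambda>y. f x y) ` Y" using assms by auto
  have "compact ((\<lambda>y. f x y) ` Y)" using assms(2,3) by (intro compact_continuous_image) auto
  then show "bdd_above ((\<lambda>y. f x y) ` Y)" by (intro bounded_imp_bdd_above compact_imp_bounded)
qed

lemma maxY_le:
  fixes f :: "real \<Rightarrow> real \<Rightarrow> real"
  assumes "Y \<noteq> {}" "\<And>y. y \<in> Y \<Longrightarrow> f x y \<le> V"
  shows "maxY Y f x \<le> V"
  unfolding maxY_def using assms by (intro cSup_least) auto

lemma fact_Suc_real: "(fact (k+1) :: real) = real (k+1) * fact k"
  by (simp add: fact_Suc)

lemma part1:
  fixes lam mu rho D :: real and k :: nat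
  assumes lam: "lam > 0" and mu: "mu > 0" and rho: "rho > 0" and D: "D > 0" and k: "k \<ge> 2"
    and muc: "mu \<le> sqrt (lam * rho * D^(k-1) / fact k)"
  shows "\<exists>mub yh xs. 0 \<le> mub \<and> mub \<le> mu \<and> yh \<in> {0..D} \<and>
              (moreau lam (maxY {0..D} (taylor_y k (F k (-1) lam mub rho) yh))
                 has_real_derivative 0) (at xs) \<and>
              (\<exists>d. (moreau lam (maxY {0..D} (F k (-1) lam mub rho)) has_real_derivative d) (at xs)
                   \<and> \<bar>d\<bar> \<ge> mu * D / (2 * real k))"
proof -
  define mub where "mub = mu/2"
  define x0 where "x0 = mub*D/lam"
  define c where "c = rho / fact (k+1)"
  define cp where "cp = rho / fact k"
  have cpos: "c > 0" unfolding c_def using rho by simp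
  have cppos: "cp > 0" unfolding cp_def using rho by simp
  have cp_eq: "cp = c * real (k+1)"
  proof -
    have n0: "real (k+1) \<noteq> 0" by simp
    have "c * real (k+1) = rho / (real (k+1) * fact k) * real (k+1)" unfolding c_def fact_Suc_real ..
    also have "\<dots> = rho / fact k" using n0 by simp
    finally show ?thesis unfolding cp_def by simp
  qed
  have mub: "mub > 0" unfolding mub_def using mu by simp
  have X0: "lam * rho * D^(k-1) / fact k \<ge> 0" using lam rho D by simp
  have mu2: "mu^2 \<le> lam * rho * D^(k-1) / fact k"
  proof -
    have "mu^2 \<le> (sqrt (lam * rho * D^(k-1) / fact k))^2" using muc mu by (intro power_mono) auto
    then show ?thesis using X0 by simp
  qed
  have mu2': "mu^2 \<le> lam * cp * D^(k-1)" using mu2 unfolding cp_def by (simp add: field_simps)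
  have DK: "D^k = D * D^(k-1)" using k by (metis One_nat_def Suc_le_D Suc_le_lessD diff_Suc_1 numeral_2_eq_2 power_Suc)
  have T: "taylor_y k (F k (-1) lam mub rho) 0 = (\<lambda>x y. -lam*x^2/2 + mub*x*y)"
  proof (intro ext)
    fix x y :: real
    show "taylor_y k (F k (-1) lam mub rho) 0 x y = -lam*x^2/2 + mub*x*y"
      using taylor_F[of k "-1" lam mub rho 0 x y] taylor_sum_zero[of k y] k by simp
  qed
  have Tderiv: "(moreau lam (maxY {0..D} (taylor_y k (F k (-1) lam mub rho) 0)) has_real_derivative 0) (at x0)"
  proof -
    have "(moreau lam (maxY {0..D} (\<lambda>x y. -lam*x^2/2 + mub*x*y)) has_real_derivative (2*lam*(x0-x0))) (at x0)"
    proof (rule env2[where M="mub*x0*D" and b="mub*D"])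
      show "lam > 0" by (rule lam)
      fix u
      have "(\<lambda>x y. -lam*x^2/2 + mub*x*y) u D \<le> maxY {0..D} (\<lambda>x y. -lam*x^2/2 + mub*x*y) u"
        by (rule maxY_ge) (use D in \<open>auto intro!: continuous_intros\<close>)
      then have "-lam*u^2/2 + mub*u*D \<le> maxY {0..D} (\<lambda>x y. -lam*x^2/2 + mub*x*y) u" by simp
      then show "-lam*u^2/2 + mub*x0*D + mub*D*(u-x0) \<le> maxY {0..D} (\<lambda>x y. -lam*x^2/2 + mub*x*y) u"
        by (simp add: algebra_simps)
    next
      have x0pos: "mub*x0 \<ge> 0" unfolding x0_def using mub lam D by simp
      show "maxY {0..D} (\<lambda>x y. -lam*x^2/2 + mub*x*y) x0 \<le> -lam*x0^2/2 + mub*x0*D"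
        using D by (intro maxY_le) (auto intro!: mult_left_mono x0pos)
    next
      show "mub*D = lam*(2*x0 - x0)" unfolding x0_def using lam by simp
    qed
    then show ?thesis unfolding T by simp
  qed
  define hf where "hf = (\<lambda>y. cp*y^k - mub^2*(2*D - y)/lam)"
  have hf0: "hf 0 < 0"
  proof -
    have z: "(0::real)^k = 0" using k by simp
    show ?thesis unfolding hf_def z using mub lam D by simp
  qed
  have mub2: "mub^2 \<le> lam*cp*D^(k-1)/4" unfolding mub_def using mu2' by (simp add: power_divide)
  have hfD: "hf D \<ge> 0"
  proof -
    have "mub^2*(2*D - D)/lam = mub^2*D/lam" by simp
    also have "\<dots> \<le> (lam*cp*D^(k-1)/4)*D/lam" using mub2 D lam by (intro divide_right_mono mult_right_mono) auto
    also have "\<dots> \<le> cp*D^k" unfolding DK using lam cppos D by (simp add: field_simps)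
    finally show ?thesis unfolding hf_def by simp
  qed
  have "\<exists>y0. 0 \<le> y0 \<and> y0 \<le> D \<and> hf y0 = 0"
    using hf0 hfD D lam unfolding hf_def by (intro IVT') (auto intro!: continuous_intros)
  then obtain y0 where y0: "0 \<le> y0" "y0 \<le> D" "hf y0 = 0" by blast
  have y0pos: "y0 > 0" using y0 hf0 by (cases "y0 = 0") auto
  define u0 where "u0 = mub*(2*D - y0)/lam"
  have stat: "mub*u0 = cp*y0^k" using y0(3) unfolding hf_def u0_def by (simp add: field_simps power2_eq_square)
  have Fd: "(moreau lam (maxY {0..D} (F k (-1) lam mub rho)) has_real_derivative (2*lam*(x0-u0))) (at x0)"
  proof (rule env2[where M="mub*u0*y0 - c*y0^(k+1)" and b="mub*y0"])
    show "lam > 0" by (rule lam)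
    fix u
    have "F k (-1) lam mub rho u y0 \<le> maxY {0..D} (F k (-1) lam mub rho) u"
      using y0 by (intro maxY_ge) (auto simp: F_def intro!: continuous_intros)
    moreover have "F k (-1) lam mub rho u y0 = -lam*u^2/2 + (mub*u0*y0 - c*y0^(k+1)) + mub*y0*(u-u0)"
      unfolding F_def c_def using y0pos by (simp add: algebra_simps)
    ultimately show "-lam*u^2/2 + (mub*u0*y0 - c*y0^(k+1)) + mub*y0*(u-u0) \<le> maxY {0..D} (F k (-1) lam mub rho) u"
      by simp
  next
    show "maxY {0..D} (F k (-1) lam mub rho) u0 \<le> -lam*u0^2/2 + (mub*u0*y0 - c*y0^(k+1))"
    proof (rule maxY_le)
      show "{0..D} \<noteq> {}" using D by simp
      fix y assume y: "y \<in> {0..D}"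
      have tp: "y0^(k+1) + real (k+1)*y0^k*(y - y0) \<le> y^(k+1)"
        using y y0 by (intro tangent_pow) auto
      have "c*(y0^(k+1) + real (k+1)*y0^k*(y - y0)) \<le> c*y^(k+1)"
        using tp cpos by (intro mult_left_mono) auto
      moreover have "c*(y0^(k+1) + real (k+1)*y0^k*(y - y0)) = c*y0^(k+1) + (c*real (k+1)*y0^k)*(y - y0)"
        by (simp only: distrib_left mult.assoc)
      moreover have "c*real (k+1)*y0^k*(y - y0) = mub*u0*(y - y0)" using stat cp_eq by simp
      moreover have "mub*u0*(y-y0) = mub*u0*y - mub*u0*y0" by (simp add: algebra_simps)
      ultimately have "mub*u0*y - c*y^(k+1) \<le> mub*u0*y0 - c*y0^(k+1)"
        by linarith
      moreover have "F k (-1) lam mub rho u0 y = -lam*u0^2/2 + mub*u0*y - c*y^(k+1)"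
        unfolding F_def c_def using y by (simp add: algebra_simps)
      ultimately show "F k (-1) lam mub rho u0 y \<le> -lam*u0^2/2 + (mub*u0*y0 - c*y0^(k+1))"
        by simp
    qed
  next
    show "mub*y0 = lam*(2*x0 - u0)" unfolding x0_def u0_def using lam by (simp add: field_simps)
  qed
  have y0b: "y0 \<le> D - D/(2*real k)"
  proof (rule ccontr)
    assume "\<not> ?thesis"
    then have gt: "y0 > D*(1 - 1/(2*real k))" by (simp add: field_simps)
    have b1: "1 + real k * (-1/(2*real k)) \<le> (1 + (-1/(2*real k)))^k"
      using k by (intro Bernoulli_inequality) (auto simp: field_simps)
    have half: "1/2 \<le> (1 - 1/(2*real k))^k" using b1 k by simp
    have nn: "0 \<le> D*(1 - 1/(2*real k))" using D k by (simp add: field_simps)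
    have "(D*(1 - 1/(2*real k)))^k < y0^k" using gt nn k by (intro power_strict_mono) auto
    moreover have "D^k*(1/2) \<le> D^k*(1 - 1/(2*real k))^k" using half D by (intro mult_left_mono) auto
    ultimately have "D^k/2 < y0^k" by (simp add: power_mult_distrib)
    then have A1: "cp*D^k/2 < cp*y0^k" using cppos by simp
    have "cp*y0^k = mub^2*(2*D - y0)/lam" using y0(3) unfolding hf_def by simp
    also have "\<dots> \<le> mub^2*(2*D)/lam" using y0pos lam by (intro divide_right_mono mult_left_mono) auto
    also have "\<dots> \<le> (lam*cp*D^(k-1)/4)*(2*D)/lam" using mub2 lam D by (intro divide_right_mono mult_right_mono) auto
    also have "\<dots> = cp*D^k/2" unfolding DK using lam by (simp add: field_simps)
    finally show False using A1 by simp
  qed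
  have dval: "2*lam*(x0-u0) = mu*(y0 - D)" unfolding x0_def u0_def mub_def using lam by (simp add: field_simps)
  have "\<bar>2*lam*(x0-u0)\<bar> = mu*(D - y0)" unfolding dval using mu y0 by (simp add: abs_if algebra_simps)
  also have "\<dots> \<ge> mu*(D/(2*real k))" using y0b mu by (intro mult_left_mono) auto
  finally have db: "\<bar>2*lam*(x0-u0)\<bar> \<ge> mu * D / (2 * real k)" by simp
  have "0 \<le> mub \<and> mub \<le> mu \<and> (0::real) \<in> {0..D} \<and>
              (moreau lam (maxY {0..D} (taylor_y k (F k (-1) lam mub rho) 0))
                 has_real_derivative 0) (at x0) \<and>
              (\<exists>d. (moreau lam (maxY {0..D} (F k (-1) lam mub rho)) has_real_derivative d) (at x0)
                   \<and> \<bar>d\<bar> \<ge> mu * D / (2 * real k))"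
    using Tderiv Fd db mub D unfolding mub_def by auto
  then show ?thesis by blast
qed



lemma lin_max: fixes t z Dh :: real assumes "\<bar>z\<bar> \<le> Dh" shows "t*z \<le> max (t*Dh) (t*(-Dh))"
proof (cases "t \<ge> 0")
  case True then have "t*z \<le> t*Dh" using assms by (intro mult_left_mono) auto
  then show ?thesis by simp
next
  case False then have "t*z \<le> t*(-Dh)" using assms by (intro mult_left_mono_neg) auto
  then show ?thesis by simp
qed

lemma taylor_pos_closed:
  fixes h :: real
  assumes "h > 0" "k \<ge> 1"
  shows "taylor_y k (F k s lam mub rho) h = (\<lambda>x y. -lam*x^2/2 + mub*x*y + s*rho/fact(k+1)*(y^(k+1) - (y-h)^(k+1)))"
  using taylor_F[OF assms(2)] taylor_sum_pos[OF assms(1)] by (intro ext) simp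

lemma part2_even:
  fixes lam mu rho D :: real and k :: nat
  assumes lam: "lam > 0" and mu: "mu > 0" and rho: "rho > 0" and D: "D > 0" and k: "k \<ge> 2" and ev: "even k"
    and muc: "mu \<ge> sqrt (lam * rho * D^(k-1) / fact k)"
  shows "\<exists>mub yh xs. 0 \<le> mub \<and> mub \<le> mu \<and> yh \<in> {-D/2..D/2} \<and>
              (moreau lam (maxY {-D/2..D/2} (taylor_y k (F k 1 lam mub rho) yh))
                 has_real_derivative 0) (at xs) \<and>
              (\<exists>d. (moreau lam (maxY {-D/2..D/2} (F k 1 lam mub rho)) has_real_derivative d) (at xs)
                   \<and> \<bar>d\<bar> \<ge> sqrt (lam * rho * D^(k-1) / fact k) * D / (2 * real k))"
proof -
  define mub where "mub = sqrt (lam * rho * D^(k-1) / fact k)"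
  define c where "c = rho / fact (k+1)"
  define cp where "cp = rho / fact k"
  have cpos: "c > 0" unfolding c_def using rho by simp
  have cp_eq: "cp = c * real (k+1)"
  proof -
    have n0: "real (k+1) \<noteq> 0" by simp
    have "c * real (k+1) = rho / (real (k+1) * fact k) * real (k+1)" unfolding c_def fact_Suc_real ..
    also have "\<dots> = rho / fact k" using n0 by simp
    finally show ?thesis unfolding cp_def by simp
  qed
  have X0: "lam * rho * D^(k-1) / fact k \<ge> 0" using lam rho D by simp
  have mub2: "mub^2 = lam*cp*D^(k-1)" unfolding mub_def cp_def using X0 by simp
  have mubpos: "mub > 0" unfolding mub_def using lam rho D by simp
  have DK: "D^k = D * D^(k-1)" using k by (metis One_nat_def Suc_le_D Suc_le_lessD diff_Suc_1 numeral_2_eq_2 power_Suc)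
  define q where "q = (1 - 1/2^k :: real)"
  have pk: "(2::real)^k \<ge> 4" using power_increasing[of 2 k "2::real"] k by simp
  have q34: "q \<ge> 3/4" unfolding q_def using pk by (simp add: field_simps)
  have q1: "q \<le> 1" unfolding q_def by simp
  define z where "z = D*q/real (k+1)"
  define x0 where "x0 = mub*z/lam"
  define a where "a = mub*x0"
  have zpos: "z \<ge> 0" unfolding z_def using D q34 by simp
  have z4: "z \<le> D/4"
  proof -
    have "4*q \<le> real (k+1)"
    proof (cases "k = 2")
      case True then show ?thesis unfolding q_def by simp
    next
      case False then have "k \<ge> 3" using k by simp
      then show ?thesis using q1 by simp
    qed
    then have "D*(4*q) \<le> D*real (k+1)" using D by (intro mult_left_mono) auto
    then show ?thesis unfolding z_def using D by (simp add: field_simps)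
  qed
  have a_eq: "a = c*D^k*q"
  proof -
    have "a = mub^2*z/lam" unfolding a_def x0_def by (simp add: power2_eq_square)
    also have "\<dots> = cp*D^(k-1)*z" unfolding mub2 using lam by simp
    also have "\<dots> = c*D^k*q" unfolding cp_eq z_def DK by (simp add: field_simps)
    finally show ?thesis .
  qed
  define Ob where "Ob = (\<lambda>y. a*y + c*(y^(k+1) - (y-D/2)^(k+1)))"
  have odd1: "odd (k+1)" using ev by simp
  have tie: "Ob (-D/2) = Ob (D/2)"
  proof -
    have e1: "(-D/2)^(k+1) = -((D/2)^(k+1))" using odd1 by (simp add: power_minus_odd)
    have e2: "(-D/2 - D/2)^(k+1) = -(D^(k+1))" using odd1 by (simp add: power_minus_odd)
    have e3: "(D/2)^(k+1) = D^(k+1)/(2*2^k)" by (simp add: power_divide)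
    have e4: "D^(k+1) = D*D^k" by simp
    show ?thesis unfolding Ob_def e1 e2 e3 a_eq q_def
      by (simp add: e4 field_simps)
  qed
  define M where "M = Ob (D/2)"
  have G: "Ob y \<le> M" if "y \<in> {-D/2..D/2}" for y
  proof -
    have "Ob y \<le> max (Ob (-D/2)) (Ob (D/2))" unfolding Ob_def
      by (rule G_even[OF ev less_imp_le[OF cpos]]) (use D that in auto)
    then show ?thesis using tie unfolding M_def by simp
  qed
  have Tc: "taylor_y k (F k 1 lam mub rho) (D/2) = (\<lambda>x y. -lam*x^2/2 + mub*x*y + c*(y^(k+1) - (y-D/2)^(k+1)))"
    using taylor_pos_closed[of "D/2" k 1 lam mub rho] D k unfolding c_def by simp
  define fh where "fh = (\<lambda>x y. -lam*x^2/2 + mub*x*y + c*(y^(k+1) - (y-D/2)^(k+1)))"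
  have fh_eq: "fh u y = -lam*u^2/2 + Ob y + mub*(u - x0)*y" for u y
    unfolding fh_def Ob_def a_def by (simp add: algebra_simps)
  have cont_fh: "continuous_on Y (fh u)" for u Y unfolding fh_def by (intro continuous_intros)
  have Td: "(moreau lam (maxY {-D/2..D/2} fh) has_real_derivative (2*lam*(x0-x0))) (at x0)"
  proof (rule env2[where M=M and b="mub*z"])
    show "lam > 0" by (rule lam)
    fix u
    have m1: "fh u (D/2) \<le> maxY {-D/2..D/2} fh u" using D by (intro maxY_ge cont_fh) auto
    have m2: "fh u (-D/2) \<le> maxY {-D/2..D/2} fh u" using D by (intro maxY_ge cont_fh) auto
    have "mub*(u-x0)*z \<le> max (mub*(u-x0)*(D/2)) (mub*(u-x0)*(-(D/2)))"
      using zpos z4 D by (intro lin_max) auto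
    then show "-lam*u^2/2 + M + mub*z*(u-x0) \<le> maxY {-D/2..D/2} fh u"
      using m1 m2 unfolding fh_eq M_def tie[symmetric] using tie by (auto simp: algebra_simps max_def split: if_splits)
  next
    show "maxY {-D/2..D/2} fh x0 \<le> -lam*x0^2/2 + M"
      using D G by (intro maxY_le) (auto simp: fh_eq)
  next
    show "mub*z = lam*(2*x0 - x0)" unfolding x0_def using lam by simp
  qed
  have Tderiv: "(moreau lam (maxY {-D/2..D/2} (taylor_y k (F k 1 lam mub rho) (D/2))) has_real_derivative 0) (at x0)"
    using Td unfolding Tc fh_def by simp
  define C where "C = c*(D/2)^(k+1)"
  have Fd: "(moreau lam (maxY {-D/2..D/2} (F k 1 lam mub rho)) has_real_derivative (2*lam*(x0-0))) (at x0)"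
  proof (rule env2[where M=C and b="2*mub*z"])
    show "lam > 0" by (rule lam)
    fix u
    have contF: "continuous_on Y (F k 1 lam mub rho u)" for Y unfolding F_def by (intro continuous_intros) auto
    have m1: "F k 1 lam mub rho u (D/2) \<le> maxY {-D/2..D/2} (F k 1 lam mub rho) u" using D by (intro maxY_ge contF) auto
    have m2: "F k 1 lam mub rho u (-D/2) \<le> maxY {-D/2..D/2} (F k 1 lam mub rho) u" using D by (intro maxY_ge contF) auto
    have f1: "F k 1 lam mub rho u (D/2) = -lam*u^2/2 + C + (mub*u)*(D/2)"
      unfolding F_def C_def c_def using D by simp
    have f2: "F k 1 lam mub rho u (-D/2) = -lam*u^2/2 + C + (mub*u)*(-(D/2))"
      unfolding F_def C_def c_def using D by simp
    have "(mub*u)*(2*z) \<le> max ((mub*u)*(D/2)) ((mub*u)*(-(D/2)))"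
      using zpos z4 D by (intro lin_max) auto
    then show "-lam*u^2/2 + C + 2*mub*z*(u-0) \<le> maxY {-D/2..D/2} (F k 1 lam mub rho) u"
      using m1 m2 unfolding f1 f2 by (auto simp: algebra_simps max_def split: if_splits)
  next
    show "maxY {-D/2..D/2} (F k 1 lam mub rho) 0 \<le> -lam*0^2/2 + C"
    proof (rule maxY_le)
      show "{-D/2..D/2} \<noteq> {}" using D by simp
      fix y assume y: "y \<in> {-D/2..D/2}"
      have "\<bar>y\<bar>^(k+1) \<le> (D/2)^(k+1)" using y by (intro power_mono) auto
      then have "c*\<bar>y\<bar>^(k+1) \<le> C" unfolding C_def using cpos by (intro mult_left_mono) auto
      then show "F k 1 lam mub rho 0 y \<le> -lam*0^2/2 + C" unfolding F_def c_def by simp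
    qed
  next
    show "2*mub*z = lam*(2*x0 - 0)" unfolding x0_def using lam by simp
  qed
  have db: "\<bar>2*lam*(x0-0)\<bar> \<ge> mub * D / (2 * real k)"
  proof -
    have "2*lam*(x0-0) = 2*mub*z" unfolding x0_def using lam by simp
    moreover have "2*z \<ge> D/(2*real k)"
    proof -
      have h1: "real k * 3 \<le> real k * (4*q)" using q34 k by (intro mult_left_mono) auto
      have h2: "real k * (4*q) = 4*real k*q" by (simp add: algebra_simps)
      have h3: "real k \<ge> 2" using k by simp
      have "real k + 1 \<le> 4*real k*q" using h1 h2 h3 by linarith
      then have "real (k+1) \<le> 4*real k*q" by simp
      then have "D*real (k+1) \<le> D*(4*real k*q)" using D by (intro mult_left_mono) auto
      then show ?thesis unfolding z_def using k by (simp add: field_simps)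
    qed
    moreover have "mub*(D/(2*real k)) \<le> mub*(2*z)" using mubpos calculation(2) by (intro mult_left_mono) auto
    ultimately show ?thesis using mubpos zpos by (simp add: abs_if)
  qed
  have "0 \<le> mub \<and> mub \<le> mu \<and> D/2 \<in> {-D/2..D/2} \<and>
              (moreau lam (maxY {-D/2..D/2} (taylor_y k (F k 1 lam mub rho) (D/2)))
                 has_real_derivative 0) (at x0) \<and>
              (\<exists>d. (moreau lam (maxY {-D/2..D/2} (F k 1 lam mub rho)) has_real_derivative d) (at x0)
                   \<and> \<bar>d\<bar> \<ge> sqrt (lam * rho * D^(k-1) / fact k) * D / (2 * real k))"
    using Tderiv Fd db mubpos D muc unfolding mub_def[symmetric] by auto
  then show ?thesis by blast
qed



lemma part2_odd:
  fixes lam mu rho D w h :: real and k :: nat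
  assumes lam: "lam > 0" and mu: "mu > 0" and rho: "rho > 0" and D: "D > 0" and k: "k \<ge> 2" and od: "odd k"
    and muc: "mu \<ge> sqrt (lam * rho * D^(k-1) / fact k)"
    and w1: "D/4 \<le> w" and w2: "w < D/2" and h1: "0 < h" and h2: "h \<le> D/2"
    and R: "((w+h)^k - w^k)/(w*D^(k-1)) \<le> 1"
    and Rb: "sqrt (((w+h)^k - w^k)/(w*D^(k-1))) * (D - 2*w) \<ge> D/(2*real k)"
    and E: "(-(rho/fact k)*((w+h)^k - w^k))*(D/2) + rho/fact(k+1)*((D/2)^(k+1) - (D/2-h)^(k+1))
            \<le> (-(rho/fact k)*((w+h)^k - w^k))*(-w) + rho/fact(k+1)*((-w)^(k+1) - (-w-h)^(k+1))"
  shows "\<exists>mub yh xs. 0 \<le> mub \<and> mub \<le> mu \<and> yh \<in> {-D/2..D/2} \<and>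
              (moreau lam (maxY {-D/2..D/2} (taylor_y k (F k 1 lam mub rho) yh))
                 has_real_derivative 0) (at xs) \<and>
              (\<exists>d. (moreau lam (maxY {-D/2..D/2} (F k 1 lam mub rho)) has_real_derivative d) (at xs)
                   \<and> \<bar>d\<bar> \<ge> sqrt (lam * rho * D^(k-1) / fact k) * D / (2 * real k))"
proof -
  define mc where "mc = sqrt (lam * rho * D^(k-1) / fact k)"
  define R0 where "R0 = ((w+h)^k - w^k)/(w*D^(k-1))"
  define mub where "mub = mc * sqrt R0"
  define c where "c = rho / fact (k+1)"
  define cp where "cp = rho / fact k"
  have cpos: "c > 0" unfolding c_def using rho by simp
  have cp_eq: "cp = c * real (k+1)"
  proof -
    have n0: "real (k+1) \<noteq> 0" by simp
    have "c * real (k+1) = rho / (real (k+1) * fact k) * real (k+1)" unfolding c_def fact_Suc_real ..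
    also have "\<dots> = rho / fact k" using n0 by simp
    finally show ?thesis unfolding cp_def by simp
  qed
  have wpos: "w > 0" using w1 D by linarith
  have X0: "lam * rho * D^(k-1) / fact k \<ge> 0" using lam rho D by simp
  have mc2: "mc^2 = lam*cp*D^(k-1)" unfolding mc_def cp_def using X0 by simp
  have mcpos: "mc > 0" unfolding mc_def using lam rho D by simp
  have gap: "(w+h)^k - w^k > 0" using wpos h1 k by (simp add: power_strict_mono)
  have R0pos: "R0 > 0" unfolding R0_def using gap wpos D by simp
  have mubpos: "mub > 0" unfolding mub_def using mcpos R0pos by simp
  have mub_le: "mub \<le> mu"
  proof -
    have "sqrt R0 \<le> 1" using R unfolding R0_def by simp
    then have "mub \<le> mc" unfolding mub_def using mcpos by (simp add: mult_left_le)
    then show ?thesis using muc unfolding mc_def by simp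
  qed
  have mub2: "mub^2 = lam*cp*((w+h)^k - w^k)/w"
  proof -
    have "mub^2 = mc^2 * R0" unfolding mub_def using R0pos by (simp add: power_mult_distrib)
    also have "\<dots> = lam*cp*((w+h)^k - w^k)/w" unfolding mc2 R0_def using D wpos by (simp add: field_simps)
    finally show ?thesis .
  qed
  define z where "z = -w"
  define x0 where "x0 = mub*z/lam"
  define a where "a = mub*x0"
  have a_eq: "a = -(cp*((w+h)^k - w^k))"
  proof -
    have "a = mub^2*z/lam" unfolding a_def x0_def by (simp add: power2_eq_square)
    also have "\<dots> = -(cp*((w+h)^k - w^k))" unfolding mub2 z_def using lam wpos by (simp add: field_simps)
    finally show ?thesis .
  qed
  define Ob where "Ob = (\<lambda>y. a*y + c*(y^(k+1) - (y-h)^(k+1)))"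
  have stat: "a + c*real (k+1)*(z^k - (z-h)^k) = 0"
  proof -
    have e1: "z^k = -(w^k)" unfolding z_def using od by (simp add: power_minus_odd)
    have e0: "z - h = -(w+h)" unfolding z_def by simp
    have e2: "(z-h)^k = -((w+h)^k)" unfolding e0 using od by (rule power_minus_odd)
    show ?thesis unfolding e1 e2 a_eq cp_eq by (simp add: algebra_simps)
  qed
  have E': "Ob (D/2) \<le> Ob z" using E unfolding Ob_def a_eq cp_def c_def z_def by simp
  have G: "Ob y \<le> Ob z" if "y \<in> {-D/2..D/2}" for y
    unfolding Ob_def
    by (rule G_odd[OF od less_imp_le[OF cpos] less_imp_le[OF h1] _ _ _ stat])
       (use E' that wpos w2 h1 h2 in \<open>auto simp: z_def Ob_def\<close>)
  have Tc: "taylor_y k (F k 1 lam mub rho) h = (\<lambda>x y. -lam*x^2/2 + mub*x*y + c*(y^(k+1) - (y-h)^(k+1)))"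
    using taylor_pos_closed[of h k 1 lam mub rho] h1 k unfolding c_def by simp
  define fh where "fh = (\<lambda>x y. -lam*x^2/2 + mub*x*y + c*(y^(k+1) - (y-h)^(k+1)))"
  have fh_eq: "fh u y = -lam*u^2/2 + Ob y + mub*(u - x0)*y" for u y
    unfolding fh_def Ob_def a_def by (simp add: algebra_simps)
  have cont_fh: "continuous_on Y (fh u)" for u Y unfolding fh_def by (intro continuous_intros)
  have zY: "z \<in> {-D/2..D/2}" unfolding z_def using w2 wpos by auto
  have Td: "(moreau lam (maxY {-D/2..D/2} fh) has_real_derivative (2*lam*(x0-x0))) (at x0)"
  proof (rule env2[where M="Ob z" and b="mub*z"])
    show "lam > 0" by (rule lam)
    fix u
    have "fh u z \<le> maxY {-D/2..D/2} fh u" using zY by (intro maxY_ge cont_fh) auto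
    then show "-lam*u^2/2 + Ob z + mub*z*(u-x0) \<le> maxY {-D/2..D/2} fh u"
      unfolding fh_eq by (simp add: algebra_simps)
  next
    show "maxY {-D/2..D/2} fh x0 \<le> -lam*x0^2/2 + Ob z"
      using D G by (intro maxY_le) (auto simp: fh_eq)
  next
    show "mub*z = lam*(2*x0 - x0)" unfolding x0_def using lam by simp
  qed
  have Tderiv: "(moreau lam (maxY {-D/2..D/2} (taylor_y k (F k 1 lam mub rho) h)) has_real_derivative 0) (at x0)"
    using Td unfolding Tc fh_def by simp
  define C where "C = c*(D/2)^(k+1)"
  define u0 where "u0 = 2*x0 + mub*D/(2*lam)"
  have u0neg: "u0 \<le> 0"
  proof -
    have "u0 = mub*(D/2 - 2*w)/lam" unfolding u0_def x0_def z_def using lam by (simp add: field_simps)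
    moreover have "mub*(D/2 - 2*w) \<le> 0" using mubpos w1 by (intro mult_nonneg_nonpos) auto
    ultimately show ?thesis using lam by (simp add: divide_nonpos_pos)
  qed
  have Fd: "(moreau lam (maxY {-D/2..D/2} (F k 1 lam mub rho)) has_real_derivative (2*lam*(x0-u0))) (at x0)"
  proof (rule env2[where M="C - mub*u0*D/2" and b="-mub*D/2"])
    show "lam > 0" by (rule lam)
    fix u
    have contF: "continuous_on Y (F k 1 lam mub rho u)" for Y unfolding F_def by (intro continuous_intros) auto
    have m2: "F k 1 lam mub rho u (-D/2) \<le> maxY {-D/2..D/2} (F k 1 lam mub rho) u" using D by (intro maxY_ge contF) auto
    have ab: "\<bar>-D/2\<bar> = D/2" using D by simp
    have f1: "F k 1 lam mub rho u (-D/2) = -lam*u^2/2 + mub*u*(-D/2) + C"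
      unfolding F_def C_def c_def ab by simp
    have f2: "F k 1 lam mub rho u (-D/2) = -lam*u^2/2 + (C - mub*u0*D/2) + (-mub*D/2)*(u-u0)"
      unfolding f1 by (simp add: field_simps)
    show "-lam*u^2/2 + (C - mub*u0*D/2) + (-mub*D/2)*(u-u0) \<le> maxY {-D/2..D/2} (F k 1 lam mub rho) u"
      using m2 unfolding f2 .
  next
    show "maxY {-D/2..D/2} (F k 1 lam mub rho) u0 \<le> -lam*u0^2/2 + (C - mub*u0*D/2)"
    proof (rule maxY_le)
      show "{-D/2..D/2} \<noteq> {}" using D by simp
      fix y assume y: "y \<in> {-D/2..D/2}"
      have "\<bar>y\<bar>^(k+1) \<le> (D/2)^(k+1)" using y by (intro power_mono) auto
      then have p: "c*\<bar>y\<bar>^(k+1) \<le> C" unfolding C_def using cpos by (intro mult_left_mono) auto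
      have "(mub*u0)*y \<le> (mub*u0)*(-D/2)" using y mubpos u0neg by (intro mult_left_mono_neg) (auto simp: mult_nonneg_nonpos)
      then have l: "mub*u0*y \<le> - mub*u0*D/2" by simp
      have "F k 1 lam mub rho u0 y = -lam*u0^2/2 + mub*u0*y + c*\<bar>y\<bar>^(k+1)" unfolding F_def c_def by simp
      then show "F k 1 lam mub rho u0 y \<le> -lam*u0^2/2 + (C - mub*u0*D/2)" using p l by simp
    qed
  next
    show "-mub*D/2 = lam*(2*x0 - u0)" unfolding u0_def using lam by (simp add: field_simps)
  qed
  have db: "\<bar>2*lam*(x0-u0)\<bar> \<ge> mc * D / (2 * real k)"
  proof -
    have "2*lam*(x0-u0) = -(mub*(D - 2*w))" unfolding u0_def x0_def z_def using lam by (simp add: field_simps)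
    moreover have "mub*(D - 2*w) \<ge> 0" using mubpos w2 by simp
    moreover have "mub*(D - 2*w) = mc * (sqrt R0 * (D - 2*w))" unfolding mub_def by simp
    moreover have "mc * (sqrt R0 * (D - 2*w)) \<ge> mc * (D/(2*real k))"
      using Rb mcpos unfolding R0_def by (intro mult_left_mono) auto
    ultimately show ?thesis by simp
  qed
  have "0 \<le> mub \<and> mub \<le> mu \<and> h \<in> {-D/2..D/2} \<and>
              (moreau lam (maxY {-D/2..D/2} (taylor_y k (F k 1 lam mub rho) h))
                 has_real_derivative 0) (at x0) \<and>
              (\<exists>d. (moreau lam (maxY {-D/2..D/2} (F k 1 lam mub rho)) has_real_derivative d) (at x0)
                   \<and> \<bar>d\<bar> \<ge> sqrt (lam * rho * D^(k-1) / fact k) * D / (2 * real k))"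
    using Tderiv Fd db mubpos mub_le h1 h2 D unfolding mc_def[symmetric] by auto
  then show ?thesis by blast
qed



lemma E_half:
  fixes D w rho :: real and k :: nat
  assumes D: "D > 0" and w0: "0 < w" and w2: "w < D/2" and od: "odd k" and k: "k \<ge> 3" and rho: "rho > 0"
  shows "(-(rho/fact k)*((w+D/2)^k - w^k))*(D/2) + rho/fact(k+1)*((D/2)^(k+1) - (D/2-D/2)^(k+1))
            \<le> (-(rho/fact k)*((w+D/2)^k - w^k))*(-w) + rho/fact(k+1)*((-w)^(k+1) - (-w-D/2)^(k+1))"
proof -
  define c where "c = rho / fact (k+1)"
  have cpos: "c > 0" unfolding c_def using rho by simp
  have cp_eq: "rho / fact k = c * real (k+1)"
  proof -
    have n0: "real (k+1) \<noteq> 0" by simp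
    have "c * real (k+1) = rho / (real (k+1) * fact k) * real (k+1)" unfolding c_def fact_Suc_real ..
    also have "\<dots> = rho / fact k" using n0 by simp
    finally show ?thesis by simp
  qed
  define s where "s = w + D/2"
  have ev: "even (k+1)" using od by simp
  have e1: "(-w)^(k+1) = w^(k+1)" using ev by (simp add: power_minus_even)
  have e2: "(-w-D/2)^(k+1) = s^(k+1)"
  proof -
    have "-w-D/2 = -s" unfolding s_def by simp
    then show ?thesis using ev by (simp add: power_minus_even)
  qed
  have e3: "(D/2-D/2)^(k+1) = (0::real)" by simp
  have spos: "s > 0" unfolding s_def using w0 D by simp
  have B: "w^k \<le> s^k / 2^k"
  proof -
    have "w^k \<le> (s/2)^k" using w0 w2 unfolding s_def by (intro power_mono) auto
    then show ?thesis by (simp add: power_divide)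
  qed
  have p8: "(2::real)^k \<ge> 8" using power_increasing[of 3 k "2::real"] k by simp
  have sB: "s*w^k \<le> s^(k+1)/8"
  proof -
    have "s*w^k \<le> s*(s^k/2^k)" using B spos by (intro mult_left_mono) auto
    also have "\<dots> \<le> s*(s^k/8)" using p8 spos by (intro mult_left_mono divide_left_mono) auto
    finally show ?thesis by simp
  qed
  have Dh: "(D/2)^(k+1) \<le> s^(k+1)" using D w0 unfolding s_def by (intro power_mono) auto
  have wB: "w*w^k \<ge> 0" using w0 by simp
  have key: "real k * s^(k+1) - real (k+1)*(s*w^k) + w*w^k - (D/2)^(k+1) \<ge> 0"
  proof -
    have "real (k+1)*(s*w^k) \<le> real (k+1)*(s^(k+1)/8)" using sB by (intro mult_left_mono) auto
    moreover have "real (k+1)*(s^(k+1)/8) + s^(k+1) \<le> real k * s^(k+1)"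
    proof -
      have k3: "real k \<ge> 3" using k by simp
      have "real (k+1)/8 + 1 \<le> real k" using k3 by (simp add: field_simps)
      then have "(real (k+1)/8 + 1) * s^(k+1) \<le> real k * s^(k+1)" using spos by (intro mult_right_mono) auto
      then show ?thesis by (simp add: algebra_simps)
    qed
    ultimately show ?thesis using Dh wB by linarith
  qed
  have "(-(rho/fact k)*((w+D/2)^k - w^k))*(-w) + rho/fact(k+1)*((-w)^(k+1) - (-w-D/2)^(k+1))
      - ((-(rho/fact k)*((w+D/2)^k - w^k))*(D/2) + rho/fact(k+1)*((D/2)^(k+1) - (D/2-D/2)^(k+1)))
      = c * (real k * s^(k+1) - real (k+1)*(s*w^k) + w*w^k - (D/2)^(k+1))"
    unfolding e1 e2 e3 cp_eq c_def[symmetric] s_def[symmetric]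
    by (simp add: algebra_simps s_def)
  moreover have "c * (real k * s^(k+1) - real (k+1)*(s*w^k) + w*w^k - (D/2)^(k+1)) \<ge> 0"
    using cpos key by simp
  ultimately show ?thesis by linarith
qed

lemma R_scale:
  fixes D th tau :: real
  assumes "D > 0" "th > 0" "k \<ge> 1"
  shows "((D * tau)^k - (D*th)^k)/((D*th)*D^(k-1)) = (tau^k - th^k)/th"
proof -
  have DK: "D^k = D * D^(k-1)" using assms(3) by (metis Suc_diff_1 less_le_trans zero_less_one power_Suc)
  show ?thesis unfolding power_mult_distrib using assms
    by (simp add: DK field_simps)
qed



lemma part2_k3:
  fixes lam mu rho D :: real and k :: nat
  assumes lam: "lam > 0" and mu: "mu > 0" and rho: "rho > 0" and D: "D > 0" and k3: "k = 3"
    and muc: "mu \<ge> sqrt (lam * rho * D^(k-1) / fact k)"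
  shows "\<exists>mub yh xs. 0 \<le> mub \<and> mub \<le> mu \<and> yh \<in> {-D/2..D/2} \<and>
              (moreau lam (maxY {-D/2..D/2} (taylor_y k (F k 1 lam mub rho) yh))
                 has_real_derivative 0) (at xs) \<and>
              (\<exists>d. (moreau lam (maxY {-D/2..D/2} (F k 1 lam mub rho)) has_real_derivative d) (at xs)
                   \<and> \<bar>d\<bar> \<ge> sqrt (lam * rho * D^(k-1) / fact k) * D / (2 * real k))"
proof (rule part2_odd[OF lam mu rho D _ _ muc, where w="D/4" and h="D/4"])
  show "2 \<le> k" "odd k" using k3 by auto
  show "D/4 \<le> D/4" "D/4 < D/2" "0 < D/4" "D/4 \<le> D/2" using D by auto
  have Rv: "((D/4 + D/4)^k - (D/4)^k)/((D/4)*D^(k-1)) = 7/16"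
    unfolding k3 using D by (simp add: field_simps power3_eq_cube power2_eq_square)
  show "((D/4 + D/4)^k - (D/4)^k)/((D/4)*D^(k-1)) \<le> 1" unfolding Rv by simp
  have "1/3 \<le> sqrt (7/16::real)" by (rule real_le_rsqrt) (simp add: power2_eq_square)
  then have "(1/3)*(D/2) \<le> sqrt (7/16::real)*(D/2)" using D by (intro mult_right_mono) auto
  then show "D/(2*real k) \<le> sqrt (((D/4 + D/4)^k - (D/4)^k)/((D/4)*D^(k-1))) * (D - 2*(D/4))"
    unfolding Rv unfolding k3 by simp
  have f3: "fact 3 = (6::real)" by (simp add: fact_numeral)
  have f4: "fact 4 = (24::real)" by (simp add: fact_numeral)
  show "(-(rho/fact k)*((D/4 + D/4)^k - (D/4)^k))*(D/2) + rho/fact(k+1)*((D/2)^(k+1) - (D/2 - D/4)^(k+1))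
      \<le> (-(rho/fact k)*((D/4 + D/4)^k - (D/4)^k))*(-(D/4)) + rho/fact(k+1)*((-(D/4))^(k+1) - (-(D/4) - D/4)^(k+1))"
    (is "?L \<le> ?R")
  proof -
    have e: "(-(rho/fact k)*((D/4 + D/4)^k - (D/4)^k))*(-(D/4)) + rho/fact(k+1)*((-(D/4))^(k+1) - (-(D/4) - D/4)^(k+1))
      - ((-(rho/fact k)*((D/4 + D/4)^k - (D/4)^k))*(D/2) + rho/fact(k+1)*((D/2)^(k+1) - (D/2 - D/4)^(k+1)))
      = rho * D^4 * (54/6144)"
      unfolding k3 f3 by (simp add: f4 field_simps power_numeral_reduce)
    have "0 \<le> ?R - ?L" unfolding e using rho D by simp
    then show ?thesis by (rule diff_ge_0_iff_ge[THEN iffD1])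
  qed
qed



lemma part2_k57:
  fixes lam mu rho D :: real and k :: nat
  assumes lam: "lam > 0" and mu: "mu > 0" and rho: "rho > 0" and D: "D > 0" and k57: "k = 5 \<or> k = 7"
    and muc: "mu \<ge> sqrt (lam * rho * D^(k-1) / fact k)"
  shows "\<exists>mub yh xs. 0 \<le> mub \<and> mub \<le> mu \<and> yh \<in> {-D/2..D/2} \<and>
              (moreau lam (maxY {-D/2..D/2} (taylor_y k (F k 1 lam mub rho) yh))
                 has_real_derivative 0) (at xs) \<and>
              (\<exists>d. (moreau lam (maxY {-D/2..D/2} (F k 1 lam mub rho)) has_real_derivative d) (at xs)
                   \<and> \<bar>d\<bar> \<ge> sqrt (lam * rho * D^(k-1) / fact k) * D / (2 * real k))"
proof (rule part2_odd[OF lam mu rho D _ _ muc, where w="D/4" and h="D/2"])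
  show k2: "2 \<le> k" and od: "odd k" using k57 by auto
  show "D/4 \<le> D/4" "D/4 < D/2" "0 < D/2" "D/2 \<le> D/2" using D by auto
  have e1a: "D/4 + D/2 = D*(3/4)" by simp
  have e1b: "D/4 = D*(1/4)" by simp
  have Rv: "((D/4 + D/2)^k - (D/4)^k)/((D/4)*D^(k-1)) = ((3/4)^k - (1/4)^k)/(1/4)"
    unfolding e1a unfolding e1b using D k2 by (intro R_scale) auto
  have r1: "((3/4::real)^k - (1/4)^k)/(1/4) \<le> 1" using k57 by (auto simp: power_divide)
  have r2: "(1/real k)^2 \<le> ((3/4::real)^k - (1/4)^k)/(1/4)" using k57 by (auto simp: power2_eq_square power_divide)
  show "((D/4 + D/2)^k - (D/4)^k)/((D/4)*D^(k-1)) \<le> 1" unfolding Rv by (rule r1)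
  have "1/real k \<le> sqrt (((3/4::real)^k - (1/4)^k)/(1/4))" by (rule real_le_rsqrt[OF r2])
  then have "(1/real k)*(D/2) \<le> sqrt (((3/4::real)^k - (1/4)^k)/(1/4))*(D/2)" using D by (intro mult_right_mono) auto
  then show "D/(2*real k) \<le> sqrt (((D/4 + D/2)^k - (D/4)^k)/((D/4)*D^(k-1))) * (D - 2*(D/4))"
    unfolding Rv by (simp add: field_simps)
  show "(-(rho/fact k)*((D/4 + D/2)^k - (D/4)^k))*(D/2) + rho/fact(k+1)*((D/2)^(k+1) - (D/2 - D/2)^(k+1))
      \<le> (-(rho/fact k)*((D/4 + D/2)^k - (D/4)^k))*(-(D/4)) + rho/fact(k+1)*((-(D/4))^(k+1) - (-(D/4) - D/2)^(k+1))"
    using E_half[of D "D/4" k rho] D od k57 rho by auto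
qed

lemma exp_pow_bound:
  fixes x :: real and n :: nat
  assumes "1 + x \<ge> 0"
  shows "(1 + x)^n \<le> exp (real n * x)"
proof -
  have "(1 + x)^n \<le> (exp x)^n" using assms by (intro power_mono) (auto simp: exp_ge_add_one_self add.commute)
  also have "\<dots> = exp (real n * x)" by (simp add: exp_of_nat_mult)
  finally show ?thesis .
qed

lemma Abounds:
  fixes k :: nat
  assumes k: "k \<ge> 9"
  shows "(1 - 2/real k)^k \<le> 1/4" "(1 - 2/real k)^k \<ge> 1/27"
proof -
  have kr: "real k \<ge> 9" using k by simp
  have "(1 + (-2/real k))^k \<le> exp (real k * (-2/real k))" using kr by (intro exp_pow_bound) (simp add: field_simps)
  also have "real k * (-2/real k) = -2" using kr by simp
  finally have a1: "(1 - 2/real k)^k \<le> exp (-2)" by simp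
  have e1: "exp (1::real) \<ge> 2" using exp_ge_add_one_self[of "1::real"] by simp
  have "exp (2::real) = exp 1 * exp 1" by (simp flip: exp_add)
  moreover have "2*2 \<le> exp (1::real) * exp 1" by (rule mult_mono[OF e1 e1]) auto
  ultimately have e2: "exp (2::real) \<ge> 4" by simp
  have "exp (-2::real) = 1 / exp 2" by (simp add: exp_minus field_simps)
  also have "\<dots> \<le> 1/4" using e2 by (intro divide_left_mono) auto
  finally show "(1 - 2/real k)^k \<le> 1/4" using a1 by simp
  have "(1 + 2/(real k - 2))^k \<le> exp (real k * (2/(real k - 2)))" using kr by (intro exp_pow_bound) (simp add: field_simps)
  also have "\<dots> \<le> exp 3"
  proof -
    have "real k * (2/(real k - 2)) \<le> 3" using kr by (simp add: field_simps)
    then show ?thesis by simp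
  qed
  also have "exp (3::real) = exp 1 ^ 3" using exp_of_nat_mult[of 3 "1::real"] by simp
  also have "\<dots> \<le> 3^3" using exp_le by (intro power_mono) auto
  finally have b1: "(1 + 2/(real k - 2))^k \<le> 27" by simp
  have prod: "(1 - 2/real k) * (1 + 2/(real k - 2)) = 1" using kr by (simp add: field_simps)
  then have "(1 - 2/real k)^k * (1 + 2/(real k - 2))^k = 1" by (metis power_mult_distrib power_one)
  moreover have pos: "(1 + 2/(real k - 2))^k > 0"
  proof -
    have "1 + 2/(real k - 2) > 0" using kr by (intro add_pos_pos) auto
    then show ?thesis by simp
  qed
  moreover have gen: "\<And>a b::real. a*b = 1 \<Longrightarrow> b > 0 \<Longrightarrow> a = 1/b" by (simp add: field_simps)
  ultimately have "(1 - 2/real k)^k = 1 / (1 + 2/(real k - 2))^k" by blast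
  also have "\<dots> \<ge> 1/27" using b1 pos by (intro divide_left_mono) auto
  finally show "(1 - 2/real k)^k \<ge> 1/27" .
qed



lemma part2_k9:
  fixes lam mu rho D :: real and k :: nat
  assumes lam: "lam > 0" and mu: "mu > 0" and rho: "rho > 0" and D: "D > 0" and k9: "k \<ge> 9" and od: "odd k"
    and muc: "mu \<ge> sqrt (lam * rho * D^(k-1) / fact k)"
  shows "\<exists>mub yh xs. 0 \<le> mub \<and> mub \<le> mu \<and> yh \<in> {-D/2..D/2} \<and>
              (moreau lam (maxY {-D/2..D/2} (taylor_y k (F k 1 lam mub rho) yh))
                 has_real_derivative 0) (at xs) \<and>
              (\<exists>d. (moreau lam (maxY {-D/2..D/2} (F k 1 lam mub rho)) has_real_derivative d) (at xs)
                   \<and> \<bar>d\<bar> \<ge> sqrt (lam * rho * D^(k-1) / fact k) * D / (2 * real k))"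
proof -
  define th where "th = 1/2 - 2/real k"
  define tau where "tau = 1 - 2/real k"
  have kr: "real k \<ge> 9" using k9 by simp
  have th1: "th \<ge> 1/4" unfolding th_def using kr by (simp add: field_simps)
  have th2: "th < 1/2" unfolding th_def using kr by simp
  have A1: "tau^k \<le> 1/4" "tau^k \<ge> 1/27" unfolding tau_def using Abounds[OF k9] by auto
  have thk: "th^k \<le> 1/512"
  proof -
    have "th^k \<le> (1/2)^k" using th1 th2 by (intro power_mono) auto
    also have "(1/2::real)^k \<le> (1/2)^9" using k9 by (intro power_decreasing) auto
    finally show ?thesis by (simp add: power_divide)
  qed
  have thk0: "th^k \<ge> 0" using th1 by simp
  define r where "r = (tau^k - th^k)/th"
  have r1: "r \<le> 1"
  proof -
    have "tau^k - th^k \<le> th" using A1 thk0 th1 by linarith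
    then show ?thesis unfolding r_def using th1 by (simp add: pos_divide_le_eq)
  qed
  have r2: "r \<ge> 1/64"
  proof -
    have num: "tau^k - th^k \<ge> 1/64" using A1 thk by linarith
    have "tau^k - th^k \<le> (tau^k - th^k)/th"
      using num th1 th2 by (simp add: le_divide_eq mult_le_cancel_left1)
    then show ?thesis unfolding r_def using num by linarith
  qed
  have ew: "D*th + D/2 = D*tau" unfolding th_def tau_def by (simp add: field_simps)
  have Rv: "((D*th + D/2)^k - (D*th)^k)/((D*th)*D^(k-1)) = r"
    unfolding ew r_def using D th1 k9 by (intro R_scale) auto
  show ?thesis
  proof (rule part2_odd[OF lam mu rho D _ od muc, where w="D*th" and h="D/2"])
    show "2 \<le> k" using k9 by simp
    show "D/4 \<le> D*th" using th1 D by (simp add: field_simps)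
    show "D*th < D/2" using th2 D by simp
    show "0 < D/2" "D/2 \<le> D/2" using D by auto
    show "((D*th + D/2)^k - (D*th)^k)/((D*th)*D^(k-1)) \<le> 1" unfolding Rv by (rule r1)
    have s8: "1/8 \<le> sqrt r" by (rule real_le_rsqrt) (use r2 in \<open>simp add: power2_eq_square\<close>)
    have dd: "D - 2*(D*th) = 4*D/real k" unfolding th_def using kr by (simp add: field_simps)
    have "(1/8)*(4*D/real k) \<le> sqrt r * (4*D/real k)" using s8 D kr by (intro mult_right_mono) auto
    then show "D/(2*real k) \<le> sqrt (((D*th + D/2)^k - (D*th)^k)/((D*th)*D^(k-1))) * (D - 2*(D*th))"
      unfolding Rv dd by simp
    show "(-(rho/fact k)*((D*th + D/2)^k - (D*th)^k))*(D/2) + rho/fact(k+1)*((D/2)^(k+1) - (D/2 - D/2)^(k+1))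
      \<le> (-(rho/fact k)*((D*th + D/2)^k - (D*th)^k))*(-(D*th)) + rho/fact(k+1)*((-(D*th))^(k+1) - (-(D*th) - D/2)^(k+1))"
      by (rule E_half) (use D th1 th2 od k9 rho in auto)
  qed
qed


theorem proposition5:
  fixes lam mu rho D :: real and k :: nat
  assumes "lam > 0" "mu > 0" "rho > 0" "D > 0" "k \<ge> 2"
  defines "mu_cr \<equiv> sqrt (lam * rho * D^(k-1) / fact k)"
  shows "(mu \<le> mu_cr \<longrightarrow>
           (\<exists>mub yh xs. 0 \<le> mub \<and> mub \<le> mu \<and> yh \<in> {0..D} \<and>
              (moreau lam (maxY {0..D} (taylor_y k (F k (-1) lam mub rho) yh))
                 has_real_derivative 0) (at xs) \<and>
              (\<exists>d. (moreau lam (maxY {0..D} (F k (-1) lam mub rho)) has_real_derivative d) (at xs)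
                   \<and> \<bar>d\<bar> \<ge> mu * D / (2 * real k))))
       \<and> (mu \<ge> mu_cr \<longrightarrow>
           (\<exists>mub yh xs. 0 \<le> mub \<and> mub \<le> mu \<and> yh \<in> {-D/2..D/2} \<and>
              (moreau lam (maxY {-D/2..D/2} (taylor_y k (F k 1 lam mub rho) yh))
                 has_real_derivative 0) (at xs) \<and>
              (\<exists>d. (moreau lam (maxY {-D/2..D/2} (F k 1 lam mub rho)) has_real_derivative d) (at xs)
                   \<and> \<bar>d\<bar> \<ge> mu_cr * D / (2 * real k))))"
proof -
  have P1: "mu \<le> mu_cr \<longrightarrow>
           (\<exists>mub yh xs. 0 \<le> mub \<and> mub \<le> mu \<and> yh \<in> {0..D} \<and>
              (moreau lam (maxY {0..D} (taylor_y k (F k (-1) lam mub rho) yh))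
                 has_real_derivative 0) (at xs) \<and>
              (\<exists>d. (moreau lam (maxY {0..D} (F k (-1) lam mub rho)) has_real_derivative d) (at xs)
                   \<and> \<bar>d\<bar> \<ge> mu * D / (2 * real k)))"
    using part1[OF assms(1-5)] unfolding mu_cr_def by blast
  have P2: "mu \<ge> mu_cr \<longrightarrow>
           (\<exists>mub yh xs. 0 \<le> mub \<and> mub \<le> mu \<and> yh \<in> {-D/2..D/2} \<and>
              (moreau lam (maxY {-D/2..D/2} (taylor_y k (F k 1 lam mub rho) yh))
                 has_real_derivative 0) (at xs) \<and>
              (\<exists>d. (moreau lam (maxY {-D/2..D/2} (F k 1 lam mub rho)) has_real_derivative d) (at xs)
                   \<and> \<bar>d\<bar> \<ge> mu_cr * D / (2 * real k)))"
  proof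
    assume muc: "mu \<ge> mu_cr"
    then have muc': "mu \<ge> sqrt (lam * rho * D^(k-1) / fact k)" unfolding mu_cr_def .
    show "\<exists>mub yh xs. 0 \<le> mub \<and> mub \<le> mu \<and> yh \<in> {-D/2..D/2} \<and>
              (moreau lam (maxY {-D/2..D/2} (taylor_y k (F k 1 lam mub rho) yh))
                 has_real_derivative 0) (at xs) \<and>
              (\<exists>d. (moreau lam (maxY {-D/2..D/2} (F k 1 lam mub rho)) has_real_derivative d) (at xs)
                   \<and> \<bar>d\<bar> \<ge> mu_cr * D / (2 * real k))"
    proof (cases "even k")
      case True
      then show ?thesis using part2_even[OF assms(1-5) True muc'] unfolding mu_cr_def by blast
    next
      case False
      then have cs: "k = 3 \<or> k = 5 \<or> k = 7 \<or> k \<ge> 9" using assms(5) by presburger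
      show ?thesis
      proof -
        { assume "k = 3" then have ?thesis using part2_k3[OF assms(1-4) _ muc'] unfolding mu_cr_def by blast }
        moreover
        { assume "k = 5 \<or> k = 7" then have ?thesis using part2_k57[OF assms(1-4) _ muc'] unfolding mu_cr_def by blast }
        moreover
        { assume "k \<ge> 9" then have ?thesis using part2_k9[OF assms(1-4) _ False muc'] unfolding mu_cr_def by blast }
        ultimately show ?thesis using cs by blast
      qed
    qed
  qed
  show ?thesis using P1 P2 by blast
qed

end
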